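(* Consider the following slot-assignment problem. There are $M$ agents $a_1,\dots,a_M$ and $N$ stations $s_1,\dots,s_N$, a processing time $T\in\mathbb{Z}_{>0}$ and an integer $K\ge 1$; the time window $[0,KT)$ of each station $s_j$ is divided into $K$ working slots $[kT,(k+1)T)$, $k=0,\dots,K-1$. For every agent $a_i$ and station $s_j$ an arrival time $e_{i,j}\ge 0$ is given. An assignment maps each agent $a_i$ either to the NULL station or to a station $s_j$ together with a working slot $k\in\{0,\dots,K-1\}$ such that $e_{i,j}\le kT$, where no working slot of any station is assigned to more than one agent. The total idle time of an assignment is $T$ times the number of working slots (over all stations) that are not assigned to any agent, i.e. $T\,(NK-\#\{\text{agents not assigned NULL}\})$. Define the unweighted ITO flow network as follows: vertices are a source, a sink, one agent vertex $a_i$ per agent, and one working slot vertex $s_{j,k}$ for each station $s_j$ and $k=0,\dots,K-1$. Edges are: source $\to a_i$ with capacity $1$ for every $i$; $a_i\to s_{j,k}$ with capacity $1$ if and only if $k$ is the smallest integer in $\{0,\dots,K-1\}$ with $e_{i,j}\le kT$ (no edge from $a_i$ to station $s_j$ if no such $k$ exists); $s_{j,k-1}\to s_{j,k}$ with capacity $K$ for all $j$ and $k=1,\dots,K-1$; and $s_{j,k}\to$ sink with capacity $1$ for all $j,k$. Then every integral maximum flow on this network corresponds to an assignment minimizing the total idle time: decomposing the flow into source–sink paths, each path of the form source $\to a_i\to s_{j,k_0}\to s_{j,k_0+1}\to\cdots\to s_{j,k}\to$ sink assigns agent $a_i$ to working slot $k$ of station $s_j$, and every agent not on such a path is assigned the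 NULL station; the resulting assignment is feasible and has minimum total idle time among all assignments.
   Context: This is the station-assignment part of One-Shot Target Assignment and Path Finding in a sortation center: agents queue at stations, each station admits at most one agent per working slot of length $T$, and an agent whose (estimated) arrival time at a station is $e$ can occupy any working slot of that station starting at a time $kT\ge e$ within the window. Agents assigned the NULL station are inactive and do not affect the total idle time. *)

theory Defs
  imports Main "HOL-Library.Multiset" Complex_Main
begin

datatype vertex = Src | Snk | Ag nat | Sl nat nat

definition first_slot :: "nat \<Rightarrow> nat \<Rightarrow> real \<Rightarrow> nat \<Rightarrow> bool" where
  "first_slot K T e k \<longleftrightarrow> k < K \<and> e \<le> real (k * T) \<and> (\<forall>k'<k. \<not> e \<le> real (k' * T))"

text \<open>Capacities of the unweighted ITO flow network (0 = no edge).\<close>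
fun cap :: "nat \<Rightarrow> nat \<Rightarrow> nat \<Rightarrow> nat \<Rightarrow> (nat \<Rightarrow> nat \<Rightarrow> real) \<Rightarrow> vertex \<Rightarrow> vertex \<Rightarrow> real" where
  "cap M N K T e Src (Ag i) = (if i < M then 1 else 0)"
| "cap M N K T e (Ag i) (Sl j k) =
     (if i < M \<and> j < N \<and> first_slot K T (e i j) k then 1 else 0)"
| "cap M N K T e (Sl j k) (Sl j' k') =
     (if j < N \<and> j' = j \<and> 1 \<le> k' \<and> k' < K \<and> k = k' - 1 then real K else 0)"
| "cap M N K T e (Sl j k) Snk = (if j < N \<and> k < K then 1 else 0)"
| "cap M N K T e _ _ = 0"

definition verts :: "nat \<Rightarrow> nat \<Rightarrow> nat \<Rightarrow> vertex set" where
  "verts M N K = {Src, Snk} \<union> Ag ` {..<M} \<union> (\<lambda>(j, k). Sl j k) ` ({..<N} \<times> {..<K})"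

definition is_flow :: "nat \<Rightarrow> nat \<Rightarrow> nat \<Rightarrow> nat \<Rightarrow> (nat \<Rightarrow> nat \<Rightarrow> real) \<Rightarrow> (vertex \<Rightarrow> vertex \<Rightarrow> real) \<Rightarrow> bool" where
  "is_flow M N K T e f \<longleftrightarrow>
     (\<forall>u v. 0 \<le> f u v \<and> f u v \<le> cap M N K T e u v) \<and>
     (\<forall>v \<in> verts M N K - {Src, Snk}.
        (\<Sum>u \<in> verts M N K. f u v) = (\<Sum>w \<in> verts M N K. f v w))"

definition flow_value :: "nat \<Rightarrow> nat \<Rightarrow> nat \<Rightarrow> (vertex \<Rightarrow> vertex \<Rightarrow> real) \<Rightarrow> real" where
  "flow_value M N K f = (\<Sum>v \<in> verts M N K. f Src v) - (\<Sum>v \<in> verts M N K. f v Src)"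

definition is_max_flow :: "nat \<Rightarrow> nat \<Rightarrow> nat \<Rightarrow> nat \<Rightarrow> (nat \<Rightarrow> nat \<Rightarrow> real) \<Rightarrow> (vertex \<Rightarrow> vertex \<Rightarrow> real) \<Rightarrow> bool" where
  "is_max_flow M N K T e f \<longleftrightarrow> is_flow M N K T e f \<and>
     (\<forall>g. is_flow M N K T e g \<longrightarrow> flow_value M N K g \<le> flow_value M N K f)"

definition integral_flow :: "(vertex \<Rightarrow> vertex \<Rightarrow> real) \<Rightarrow> bool" where
  "integral_flow f \<longleftrightarrow> (\<forall>u v. f u v \<in> \<nat>)"

definition path_edges :: "vertex list \<Rightarrow> (vertex \<times> vertex) list" where
  "path_edges p = zip p (tl p)"

definition st_path :: "nat \<Rightarrow> nat \<Rightarrow> nat \<Rightarrow> nat \<Rightarrow> (nat \<Rightarrow> nat \<Rightarrow> real) \<Rightarrow> vertex list \<Rightarrow> bool" where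
  "st_path M N K T e p \<longleftrightarrow> 2 \<le> length p \<and> hd p = Src \<and> last p = Snk \<and>
     (\<forall>(u, v) \<in> set (path_edges p). 0 < cap M N K T e u v)"

text \<open>A decomposition of f into unit source-sink paths (a list, repetitions allowed):
  the flow on each edge equals the number of path traversals of that edge.\<close>
definition path_decomposition :: "nat \<Rightarrow> nat \<Rightarrow> nat \<Rightarrow> nat \<Rightarrow> (nat \<Rightarrow> nat \<Rightarrow> real) \<Rightarrow>
    (vertex \<Rightarrow> vertex \<Rightarrow> real) \<Rightarrow> vertex list list \<Rightarrow> bool" where
  "path_decomposition M N K T e f ps \<longleftrightarrow>
     (\<forall>p \<in> set ps. st_path M N K T e p) \<and>
     (\<forall>u v. f u v = real (sum_list (map (\<lambda>p. count_list (path_edges p) (u, v)) ps)))"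

definition path_slot :: "vertex list \<Rightarrow> nat \<times> nat" where
  "path_slot p = (case p ! (length p - 2) of Sl j k \<Rightarrow> (j, k) | _ \<Rightarrow> (0, 0))"

definition induced_assignment :: "vertex list list \<Rightarrow> nat \<Rightarrow> (nat \<times> nat) option" where
  "induced_assignment ps i =
     (if \<exists>p \<in> set ps. p ! 1 = Ag i
      then Some (path_slot (SOME p. p \<in> set ps \<and> p ! 1 = Ag i))
      else None)"

text \<open>Feasible assignment: None = NULL station; Some (j,k) = working slot k of station j.\<close>
definition feasible :: "nat \<Rightarrow> nat \<Rightarrow> nat \<Rightarrow> nat \<Rightarrow> (nat \<Rightarrow> nat \<Rightarrow> real) \<Rightarrow> (nat \<Rightarrow> (nat \<times> nat) option) \<Rightarrow> bool" where
  "feasible M N K T e a \<longleftrightarrow>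
     (\<forall>i < M. \<forall>j k. a i = Some (j, k) \<longrightarrow> j < N \<and> k < K \<and> e i j \<le> real (k * T)) \<and>
     (\<forall>i < M. \<forall>i' < M. a i \<noteq> None \<and> a i = a i' \<longrightarrow> i = i')"

definition idle_time :: "nat \<Rightarrow> nat \<Rightarrow> nat \<Rightarrow> nat \<Rightarrow> (nat \<Rightarrow> (nat \<times> nat) option) \<Rightarrow> nat" where
  "idle_time M N K T a = T * (N * K - card {i. i < M \<and> a i \<noteq> None})"

end

theory Submission
  imports Defs
begin

lemma pe_Cons2: "path_edges (x # y # r) = (x, y) # path_edges (y # r)"
  by (simp add: path_edges_def)

lemma pe_single[simp]: "path_edges [x] = []" and pe_Nil[simp]: "path_edges [] = []"
  by (simp_all add: path_edges_def)

lemma pe_mem: "(a, b) \<in> set (path_edges p) \<Longrightarrow> a \<in> set p \<and> b \<in> set p"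
  unfolding path_edges_def
  by (metis set_zip_leftD set_zip_rightD list.sel(2) list.set_sel(2))

lemma count_distinct: "distinct xs \<Longrightarrow> count_list xs x = (if x \<in> set xs then 1 else 0)"
  by (induction xs) auto

lemma sum_count_snd:
  "finite V \<Longrightarrow> fst ` set xs \<subseteq> V \<Longrightarrow> (\<Sum>u\<in>V. count_list xs (u,v)) = count_list (map snd xs) v"
proof (induction xs)
  case Nil then show ?case by simp
next
  case (Cons x xs)
  obtain a b where x: "x = (a,b)" by fastforce
  have aV: "a \<in> V" using Cons.prems x by auto
  have "(\<Sum>u\<in>V. count_list (x#xs) (u,v)) = (\<Sum>u\<in>V. (if b = v then (if u = a then 1 else 0) else 0) + count_list xs (u,v))"
    by (rule sum.cong) (auto simp: x)
  also have "\<dots> = (if b = v then 1 else 0) + (\<Sum>u\<in>V. count_list xs (u,v))"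
    using aV Cons.prems(1) by (simp add: sum.distrib)
  finally show ?case using Cons by (auto simp: x)
qed

lemma sum_count_fst:
  "finite V \<Longrightarrow> snd ` set xs \<subseteq> V \<Longrightarrow> (\<Sum>w\<in>V. count_list xs (v,w)) = count_list (map fst xs) v"
proof (induction xs)
  case Nil then show ?case by simp
next
  case (Cons x xs)
  obtain a b where x: "x = (a,b)" by fastforce
  have aV: "b \<in> V" using Cons.prems x by auto
  have "(\<Sum>u\<in>V. count_list (x#xs) (v,u)) = (\<Sum>u\<in>V. (if a = v then (if u = b then 1 else 0) else 0) + count_list xs (v,u))"
    by (rule sum.cong) (auto simp: x)
  also have "\<dots> = (if a = v then 1 else 0) + (\<Sum>u\<in>V. count_list xs (v,u))"
    using aV Cons.prems(1) by (simp add: sum.distrib)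
  finally show ?case using Cons by (auto simp: x)
qed

lemma conserv_path:
  assumes "finite V" "set p \<subseteq> V" "p \<noteq> []" "v \<noteq> hd p" "v \<noteq> last p"
  shows "(\<Sum>u\<in>V. count_list (path_edges p) (u,v)) = (\<Sum>w\<in>V. count_list (path_edges p) (v,w))"
proof -
  have f: "fst ` set (path_edges p) \<subseteq> V" "snd ` set (path_edges p) \<subseteq> V"
    using assms(2) pe_mem by fastforce+
  have "(\<Sum>u\<in>V. count_list (path_edges p) (u,v)) = count_list (tl p) v"
    using sum_count_snd[OF assms(1) f(1)] by (simp add: path_edges_def map_snd_zip_take)
  moreover have "(\<Sum>w\<in>V. count_list (path_edges p) (v,w)) = count_list (butlast p) v"
    using sum_count_fst[OF assms(1) f(2)] by (simp add: path_edges_def map_fst_zip_take butlast_conv_take)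
  moreover have "count_list p v = count_list (tl p) v"
    using assms(3,4) by (cases p) auto
  moreover have "count_list p v = count_list (butlast p) v"
    using assms(3,5) append_butlast_last_id[OF assms(3)] count_list_append
    by (metis add.right_neutral count_list.simps)
  ultimately show ?thesis by simp
qed

definition mkpath :: "nat \<Rightarrow> nat \<Rightarrow> nat \<Rightarrow> nat \<Rightarrow> vertex list" where
  "mkpath i j k0 k = Src # Ag i # map (Sl j) [k0..<Suc k] @ [Snk]"

lemma chain_struct:
  "\<lbrakk>\<forall>(u,v)\<in>set (path_edges (Sl j k # q)). 0 < cap M N K T e u v; last (Sl j k # q) = Snk\<rbrakk>
   \<Longrightarrow> \<exists>k'. k \<le> k' \<and> k' < K \<and> j < N \<and> Sl j k # q = map (Sl j) [k..<Suc k'] @ [Snk]"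
proof (induction q arbitrary: k)
  case Nil then show ?case by simp
next
  case (Cons v q)
  have c: "0 < cap M N K T e (Sl j k) v" using Cons.prems(1) by (simp add: pe_Cons2)
  have r: "\<forall>(u,w)\<in>set (path_edges (v # q)). 0 < cap M N K T e u w" using Cons.prems(1) by (simp add: pe_Cons2)
  have l: "last (v # q) = Snk" using Cons.prems(2) by simp
  show ?case
  proof (cases v)
    case Snk
    have "q = []"
    proof (rule ccontr)
      assume "q \<noteq> []" then obtain w q' where "q = w # q'" by (cases q) auto
      then show False using r Snk by (simp add: pe_Cons2)
    qed
    then show ?thesis using c Snk by (intro exI[of _ k]) (auto split: if_splits)
  next
    case (Sl j' k'')
    then have jj: "j' = j" "k'' = Suc k" "j < N" "Suc k < K" using c by (auto split: if_splits)
    obtain k' where k': "Suc k \<le> k'" "k' < K" "Sl j (Suc k) # q = map (Sl j) [Suc k..<Suc k'] @ [Snk]"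
      using Cons.IH[of "Suc k"] r l Sl jj by auto
    have "[k..<Suc k'] = k # [Suc k..<Suc k']" using k'(1) by (simp add: upt_conv_Cons)
    then show ?thesis using k' Sl jj by (intro exI[of _ k']) auto
  qed (use c in auto)
qed

lemma st_path_struct:
  assumes "st_path M N K T e p"
  shows "\<exists>i j k0 k. i < M \<and> j < N \<and> first_slot K T (e i j) k0 \<and> k0 \<le> k \<and> k < K \<and> p = mkpath i j k0 k"
proof -
  from assms have p: "2 \<le> length p" "hd p = Src" "last p = Snk"
    and E: "\<forall>(u, v) \<in> set (path_edges p). 0 < cap M N K T e u v" by (auto simp: st_path_def)
  obtain v q where pv: "p = Src # v # q" using p(1,2) by (cases p; cases "tl p") auto
  have c1: "0 < cap M N K T e Src v" using E pv by (simp add: pe_Cons2)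
  then obtain i where vi: "v = Ag i" "i < M" by (cases v) (auto split: if_splits)
  obtain w q' where qw: "q = w # q'" using p(3) pv vi by (cases q) auto
  have c2: "0 < cap M N K T e (Ag i) w" using E pv vi qw by (simp add: pe_Cons2)
  then obtain j k0 where wj: "w = Sl j k0" "j < N" "first_slot K T (e i j) k0" by (cases w) (auto split: if_splits)
  have "\<forall>(u,v)\<in>set (path_edges (Sl j k0 # q')). 0 < cap M N K T e u v"
    using E pv vi qw wj by (simp add: pe_Cons2)
  moreover have "last (Sl j k0 # q') = Snk" using p(3) pv qw wj by simp
  ultimately obtain k where "k0 \<le> k" "k < K" "Sl j k0 # q' = map (Sl j) [k0..<Suc k] @ [Snk]"
    using chain_struct by blast
  then show ?thesis using pv vi qw wj by (intro exI[of _ i] exI[of _ j] exI[of _ k0] exI[of _ k]) (auto simp: mkpath_def)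
qed

lemma set_step: "n < k \<Longrightarrow> insert (Sl j n, Sl j (Suc n)) ({(Sl j m, Sl j (Suc m)) | m. Suc n \<le> m \<and> m < k} \<union> {(Sl j k, Snk)})
   = {(Sl j m, Sl j (Suc m)) | m. n \<le> m \<and> m < k} \<union> {(Sl j k, Snk)}"
  apply (rule equalityI)
   apply auto[1]
  apply clarsimp
  done

lemma chain_edges:
  assumes "k0 \<le> k"
  shows "set (path_edges (map (Sl j) [k0..<Suc k] @ [Snk])) =
     {(Sl j m, Sl j (Suc m)) | m. k0 \<le> m \<and> m < k} \<union> {(Sl j k, Snk)}"
  using assms
proof (induction k0 rule: inc_induct)
  case base have "{(Sl j m, Sl j (Suc m)) | m. k \<le> m \<and> m < k} = {}" by auto
  show ?case unfolding \<open>_ = {}\<close> by (simp add: pe_Cons2)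
next
  case (step n)
  have u: "[n..<Suc k] = n # [Suc n..<Suc k]" using step(2) by (simp add: upt_conv_Cons)
  have u2: "[Suc n..<Suc k] = Suc n # [Suc (Suc n)..<Suc k]" using step(2) by (simp add: upt_conv_Cons)
  define r where "r = map (Sl j) [Suc (Suc n)..<Suc k] @ [Snk]"
  have e2: "map (Sl j) [Suc n..<Suc k] @ [Snk] = Sl j (Suc n) # r" unfolding r_def by (simp only: u2 list.map append_Cons)
  have e1: "map (Sl j) [n..<Suc k] @ [Snk] = Sl j n # Sl j (Suc n) # r" by (simp only: u list.map append_Cons e2)
  have "set (path_edges (map (Sl j) [n..<Suc k] @ [Snk])) =
     insert (Sl j n, Sl j (Suc n)) (set (path_edges (map (Sl j) [Suc n..<Suc k] @ [Snk])))"
    by (simp only: e1 e2 pe_Cons2 list.set(2))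
  also have "\<dots> = {(Sl j m, Sl j (Suc m)) | m. n \<le> m \<and> m < k} \<union> {(Sl j k, Snk)}"
    unfolding step(3) using step(2) by (rule set_step)
  finally show ?case .
qed

lemma mk_edges:
  assumes "k0 \<le> k"
  shows "set (path_edges (mkpath i j k0 k)) = {(Src, Ag i), (Ag i, Sl j k0), (Sl j k, Snk)} \<union>
     {(Sl j m, Sl j (Suc m)) | m. k0 \<le> m \<and> m < k}"
proof -
  have u: "[k0..<Suc k] = k0 # [Suc k0..<Suc k]" using assms by (simp add: upt_conv_Cons)
  define r where "r = map (Sl j) [Suc k0..<Suc k] @ [Snk]"
  have eq: "map (Sl j) [k0..<Suc k] @ [Snk] = Sl j k0 # r" unfolding r_def by (simp only: u list.map append_Cons)
  have "mkpath i j k0 k = Src # Ag i # Sl j k0 # r" by (simp only: mkpath_def eq)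
  then have 1: "set (path_edges (mkpath i j k0 k)) = {(Src, Ag i), (Ag i, Sl j k0)} \<union>
       set (path_edges (Sl j k0 # r))"
    by (simp add: pe_Cons2)
  have 2: "set (path_edges (Sl j k0 # r)) = {(Sl j m, Sl j (Suc m)) | m. k0 \<le> m \<and> m < k} \<union> {(Sl j k, Snk)}"
    by (simp only: eq[symmetric] chain_edges[OF assms])
  show ?thesis unfolding 1 2 by blast
qed

lemma distinct_gen: "distinct xs \<Longrightarrow> distinct (Src # Ag i # map (Sl j) xs @ [Snk])"
  by (induction xs) auto

lemma mk_distinct: "distinct (mkpath i j k0 k)"
  unfolding mkpath_def by (rule distinct_gen[OF distinct_upt])

lemma mk_pe_distinct: "distinct (path_edges (mkpath i j k0 k))"
  unfolding path_edges_def by (rule distinct_zipI1[OF mk_distinct])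

lemma mk_nth1[simp]: "mkpath i j k0 k ! 1 = Ag i"
  by (simp add: mkpath_def)

lemma mk_slot: "k0 \<le> k \<Longrightarrow> path_slot (mkpath i j k0 k) = (j, k)"
proof -
  assume "k0 \<le> k"
  then have "mkpath i j k0 k = (Src # Ag i # map (Sl j) [k0..<k]) @ [Sl j k, Snk]" (is "?L = ?R")
  proof -
    have "[k0..<Suc k] = [k0..<k] @ [k]" using \<open>k0 \<le> k\<close> by simp
    then show "?L = ?R" unfolding mkpath_def by simp
  qed
  then show ?thesis unfolding path_slot_def by (simp add: nth_append)
qed

lemma mk_hd_last: "hd (mkpath i j k0 k) = Src" "last (mkpath i j k0 k) = Snk" "mkpath i j k0 k \<noteq> []"
  by (simp_all add: mkpath_def)

lemma mk_verts: "i < M \<Longrightarrow> j < N \<Longrightarrow> k < K \<Longrightarrow> set (mkpath i j k0 k) \<subseteq> verts M N K"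
  by (auto simp: mkpath_def verts_def)

lemma finite_verts: "finite (verts M N K)"
  by (simp add: verts_def)

lemma cap_nonneg: "0 \<le> cap M N K T e u v"
  by (cases u; cases v) auto

lemma sum_list_two:
  fixes h :: "'a \<Rightarrow> nat"
  shows "p \<in> set xs \<Longrightarrow> q \<in> set xs \<Longrightarrow> p \<noteq> q \<Longrightarrow> h p + h q \<le> sum_list (map h xs)"
proof (induction xs)
  case Nil then show ?case by simp
next
  case (Cons x xs)
  show ?case
  proof (cases "p = x")
    case True
    then have "q \<in> set xs" using Cons.prems by auto
    then have "h q \<le> sum_list (map h xs)" by (simp add: member_le_sum_list)
    then show ?thesis using True by simp
  next
    case False
    show ?thesis
    proof (cases "q = x")
      case True
      then have "p \<in> set xs" using Cons.prems False by auto
      then have "h p \<le> sum_list (map h xs)" by (simp add: member_le_sum_list)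
      then show ?thesis using True by simp
    next
      case False2: False
      then have "h p + h q \<le> sum_list (map h xs)" using Cons False by auto
      then show ?thesis by simp
    qed
  qed
qed

lemma card_filter_sum:
  "finite A \<Longrightarrow> (\<Sum>i\<in>A. (if P i then 1 else 0::real)) = real (card {i\<in>A. P i})"
proof -
  assume fA: "finite A"
  have "real (card {i\<in>A. P i}) = (\<Sum>i\<in>{i\<in>A. P i}. (1::real))" by simp
  also have "\<dots> = (\<Sum>i\<in>A. if P i then 1 else 0)" using fA by (rule sum.inter_filter)
  finally show ?thesis by simp
qed

lemma exists_flow:
  assumes fa: "feasible M N K T e a" and K1: "1 \<le> K"
  shows "\<exists>g. is_flow M N K T e g \<and> flow_value M N K g = real (card {i. i < M \<and> a i \<noteq> None})"
proof -
  define A where "A = {i. i < M \<and> a i \<noteq> None}"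
  define ja where "ja i = fst (the (a i))" for i
  define ka where "ka i = snd (the (a i))" for i
  define k0 where "k0 i = (LEAST k. e i (ja i) \<le> real (k * T))" for i
  define P where "P i = mkpath i (ja i) (k0 i) (ka i)" for i
  define E where "E i = set (path_edges (P i))" for i
  have fA: "finite A" unfolding A_def by simp
  have aS: "a i = Some (ja i, ka i)" if "i \<in> A" for i
    using that unfolding A_def ja_def ka_def by auto
  have iM: "i < M" if "i \<in> A" for i using that A_def by auto
  have jN: "ja i < N" "ka i < K" "e i (ja i) \<le> real (ka i * T)" if "i \<in> A" for i
    using fa aS[OF that] iM[OF that] unfolding feasible_def by blast+
  have inj: "i = i'" if "i \<in> A" "i' \<in> A" "ja i = ja i'" "ka i = ka i'" for i i'
  proof -
    have "a i = a i'" using aS that by simp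
    then show ?thesis using fa iM that aS unfolding feasible_def by blast
  qed
  have k0le: "k0 i \<le> ka i" if "i \<in> A" for i
    unfolding k0_def using jN(3)[OF that] by (rule Least_le)
  have fs: "first_slot K T (e i (ja i)) (k0 i)" if "i \<in> A" for i
  proof -
    have "e i (ja i) \<le> real (k0 i * T)" unfolding k0_def using jN(3)[OF that] by (rule LeastI)
    moreover have "\<forall>k'<k0 i. \<not> e i (ja i) \<le> real (k' * T)"
      unfolding k0_def using not_less_Least by blast
    moreover have "k0 i < K" using k0le[OF that] jN(2)[OF that] by simp
    ultimately show ?thesis unfolding first_slot_def by blast
  qed
  have Eeq: "E i = {(Src, Ag i), (Ag i, Sl (ja i) (k0 i)), (Sl (ja i) (ka i), Snk)} \<union>
     {(Sl (ja i) m, Sl (ja i) (Suc m)) | m. k0 i \<le> m \<and> m < ka i}" if "i \<in> A" for i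
    unfolding E_def P_def using k0le[OF that] by (rule mk_edges)
  have cnt: "real (count_list (path_edges (P i)) x) = (if x \<in> E i then 1 else 0)" for i x
    unfolding E_def P_def using count_distinct[OF mk_pe_distinct] by simp
  define g where "g u v = (\<Sum>i\<in>A. real (count_list (path_edges (P i)) (u,v)))" for u v
  have gcard: "g u v = real (card {i\<in>A. (u,v) \<in> E i})" for u v
    unfolding g_def cnt using card_filter_sum[OF fA] by simp
  have posE: "0 < cap M N K T e u v" if "i \<in> A" "(u,v) \<in> E i" for i u v
  proof -
    have "(u,v) = (Src, Ag i) \<or> (u,v) = (Ag i, Sl (ja i) (k0 i)) \<or> (u,v) = (Sl (ja i) (ka i), Snk) \<or>
        (\<exists>m. (u,v) = (Sl (ja i) m, Sl (ja i) (Suc m)) \<and> m < ka i)"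
      using that(2) unfolding Eeq[OF that(1)] by blast
    then show ?thesis using iM[OF that(1)] jN[OF that(1)] fs[OF that(1)] K1 by auto
  qed
  have capg: "g u v \<le> cap M N K T e u v" for u v
  proof (cases "{i\<in>A. (u,v) \<in> E i} = {}")
    case True show ?thesis unfolding gcard True using cap_nonneg[of M N K T e u v] by simp
  next
    case False
    then obtain i0 where i0: "i0 \<in> A" "(u,v) \<in> E i0" by auto
    define S where "S = {i\<in>A. (u,v) \<in> E i}"
    have fS: "finite S" using fA S_def by simp
    have one: "real (card S) \<le> 1" if "S \<subseteq> {i0}"
    proof -
      have "card S \<le> card {i0}" using that by (rule card_mono[rotated]) simp
      then show ?thesis by simp
    qed
    have "(u,v) = (Src, Ag i0) \<or> (u,v) = (Ag i0, Sl (ja i0) (k0 i0)) \<or> (u,v) = (Sl (ja i0) (ka i0), Snk) \<or>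
        (\<exists>m. (u,v) = (Sl (ja i0) m, Sl (ja i0) (Suc m)) \<and> m < ka i0)"
      using i0(2) unfolding Eeq[OF i0(1)] by blast
    then have "real (card S) \<le> cap M N K T e u v"
    proof (elim disjE exE conjE)
      assume uv: "(u,v) = (Src, Ag i0)"
      have "S \<subseteq> {i0}"
      proof
        fix i assume "i \<in> S"
        then have "i \<in> A" "(Src, Ag i0) \<in> E i" using uv S_def by auto
        then show "i \<in> {i0}" using Eeq[OF \<open>i \<in> A\<close>] by auto
      qed
      then show ?thesis using one uv iM[OF i0(1)] by simp
    next
      assume uv: "(u,v) = (Ag i0, Sl (ja i0) (k0 i0))"
      have "S \<subseteq> {i0}"
      proof
        fix i assume "i \<in> S"
        then have "i \<in> A" "(Ag i0, Sl (ja i0) (k0 i0)) \<in> E i" using uv S_def by auto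
        then show "i \<in> {i0}" using Eeq[OF \<open>i \<in> A\<close>] by auto
      qed
      then show ?thesis using one uv iM[OF i0(1)] jN[OF i0(1)] fs[OF i0(1)] by simp
    next
      assume uv: "(u,v) = (Sl (ja i0) (ka i0), Snk)"
      have "S \<subseteq> {i0}"
      proof
        fix i assume "i \<in> S"
        then have "i \<in> A" "(Sl (ja i0) (ka i0), Snk) \<in> E i" using uv S_def by auto
        then have "ja i = ja i0" "ka i = ka i0" using Eeq[OF \<open>i \<in> A\<close>] by auto
        then show "i \<in> {i0}" using inj \<open>i \<in> A\<close> i0(1) by blast
      qed
      then show ?thesis using one uv jN[OF i0(1)] by simp
    next
      fix m assume uv: "(u,v) = (Sl (ja i0) m, Sl (ja i0) (Suc m))" and m: "m < ka i0"
      define B where "B = {i\<in>A. ja i = ja i0}"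
      have "S \<subseteq> B"
      proof
        fix i assume "i \<in> S"
        then have "i \<in> A" "(Sl (ja i0) m, Sl (ja i0) (Suc m)) \<in> E i" using uv S_def by auto
        then show "i \<in> B" using Eeq[OF \<open>i \<in> A\<close>] unfolding B_def by auto
      qed
      moreover have "card B \<le> card {..<K}"
      proof (rule card_inj_on_le)
        show "inj_on ka B" unfolding B_def inj_on_def using inj by auto
        show "ka ` B \<subseteq> {..<K}" unfolding B_def using jN by auto
      qed simp
      ultimately have "card S \<le> K" using card_mono[of B S] fA B_def by auto
      moreover have "cap M N K T e u v = real K" using uv m jN[OF i0(1)] by simp
      ultimately show ?thesis by simp
    qed
    then show ?thesis using gcard S_def by simp
  qed
  have g0: "0 \<le> g u v" for u v unfolding g_def by (simp add: sum_nonneg)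
  have Pv: "set (P i) \<subseteq> verts M N K" if "i \<in> A" for i
    unfolding P_def using iM[OF that] jN(1,2)[OF that] by (rule mk_verts)
  have cons: "(\<Sum>u \<in> verts M N K. g u v) = (\<Sum>w \<in> verts M N K. g v w)"
    if "v \<in> verts M N K - {Src, Snk}" for v
  proof -
    have "(\<Sum>u \<in> verts M N K. g u v) = (\<Sum>i\<in>A. real (\<Sum>u \<in> verts M N K. count_list (path_edges (P i)) (u,v)))"
      unfolding g_def by (simp add: sum.swap[of _ "verts M N K"])
    also have "\<dots> = (\<Sum>i\<in>A. real (\<Sum>w \<in> verts M N K. count_list (path_edges (P i)) (v,w)))"
    proof (rule sum.cong[OF refl])
      fix i assume "i \<in> A"
      have "(\<Sum>u \<in> verts M N K. count_list (path_edges (P i)) (u,v)) = (\<Sum>w \<in> verts M N K. count_list (path_edges (P i)) (v,w))"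
        using conserv_path[OF finite_verts Pv[OF \<open>i \<in> A\<close>]] that mk_hd_last unfolding P_def by auto
      then show "real (\<Sum>u \<in> verts M N K. count_list (path_edges (P i)) (u,v)) = real (\<Sum>w \<in> verts M N K. count_list (path_edges (P i)) (v,w))"
        by simp
    qed
    also have "\<dots> = (\<Sum>w \<in> verts M N K. g v w)"
      unfolding g_def by (simp add: sum.swap[of _ "verts M N K"])
    finally show ?thesis .
  qed
  have isf: "is_flow M N K T e g" unfolding is_flow_def using g0 capg cons by blast
  have out: "(\<Sum>v\<in>verts M N K. g Src v) = real (card A)"
  proof -
    have "(\<Sum>v\<in>verts M N K. g Src v) = (\<Sum>i\<in>A. (\<Sum>v\<in>verts M N K. real (count_list (path_edges (P i)) (Src,v))))"
      unfolding g_def by (rule sum.swap)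
    also have "\<dots> = (\<Sum>i\<in>A. 1)"
    proof (rule sum.cong[OF refl])
      fix i assume iA: "i \<in> A"
      have "(\<Sum>v\<in>verts M N K. real (count_list (path_edges (P i)) (Src,v))) = (\<Sum>v\<in>verts M N K. if v = Ag i then 1 else 0)"
        by (rule sum.cong[OF refl]) (use Eeq[OF iA] in \<open>auto simp: cnt\<close>)
      also have "\<dots> = 1" using iM[OF iA] finite_verts by (simp add: verts_def)
      finally show "(\<Sum>v\<in>verts M N K. real (count_list (path_edges (P i)) (Src,v))) = 1" .
    qed
    finally show ?thesis by simp
  qed
  have inn: "(\<Sum>v\<in>verts M N K. g v Src) = 0"
  proof -
    have "g v Src = 0" for v
    proof -
      have e0: "{i\<in>A. (v, Src) \<in> E i} = {}" using Eeq by auto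
      show ?thesis unfolding gcard e0 by simp
    qed
    then show ?thesis by simp
  qed
  show ?thesis using isf out inn unfolding flow_value_def A_def by auto
qed

theorem theorem1:
  fixes M N K T :: nat and e :: "nat \<Rightarrow> nat \<Rightarrow> real"
    and f :: "vertex \<Rightarrow> vertex \<Rightarrow> real" and ps :: "vertex list list"
  assumes "0 < T" and "1 \<le> K" and "\<forall>i j. 0 \<le> e i j"
    and "is_max_flow M N K T e f" and "integral_flow f"
    and "path_decomposition M N K T e f ps"
  shows "feasible M N K T e (induced_assignment ps) \<and>
         (\<forall>a. feasible M N K T e a \<longrightarrow>
              idle_time M N K T (induced_assignment ps) \<le> idle_time M N K T a)"
proof -
  note mf = assms(4) and pd = assms(6)
  have capf: "0 \<le> f u v \<and> f u v \<le> cap M N K T e u v" for u v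
    using mf unfolding is_max_flow_def is_flow_def by blast
  have maxf: "flow_value M N K g \<le> flow_value M N K f" if "is_flow M N K T e g" for g
    using mf that unfolding is_max_flow_def by blast
  have fdef: "f u v = real (sum_list (map (\<lambda>p. count_list (path_edges p) (u, v)) ps))" for u v
    using pd unfolding path_decomposition_def by blast
  have pstr: "\<exists>i j k0 k. i < M \<and> j < N \<and> first_slot K T (e i j) k0 \<and> k0 \<le> k \<and> k < K \<and> p = mkpath i j k0 k"
    if "p \<in> set ps" for p
    using pd that unfolding path_decomposition_def by (blast intro: st_path_struct)
  define ind where "ind = induced_assignment ps"
  have indS: "\<exists>p\<in>set ps. p ! 1 = Ag i \<and> path_slot p = jk" if "ind i = Some jk" for i jk
  proof -
    have ex: "\<exists>p\<in>set ps. p ! 1 = Ag i" using that unfolding ind_def induced_assignment_def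
      by (auto split: if_splits)
    then have "(SOME p. p \<in> set ps \<and> p ! 1 = Ag i) \<in> set ps \<and> (SOME p. p \<in> set ps \<and> p ! 1 = Ag i) ! 1 = Ag i"
      by (metis (mono_tags, lifting) someI_ex)
    moreover have "jk = path_slot (SOME p. p \<in> set ps \<and> p ! 1 = Ag i)"
      using that ex unfolding ind_def induced_assignment_def by auto
    ultimately show ?thesis by blast
  qed
  have indN: "ind i \<noteq> None \<longleftrightarrow> (\<exists>p\<in>set ps. p ! 1 = Ag i)" for i
    unfolding ind_def induced_assignment_def by auto
  have slotinfo: "\<exists>k0. k0 \<le> k \<and> j < N \<and> k < K \<and> first_slot K T (e i j) k0 \<and> p = mkpath i j k0 k"
    if pr: "p \<in> set ps" "p ! 1 = Ag i" "path_slot p = (j, k)" for p i j k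
  proof -
    obtain i' j' k0 k' where h: "i' < M" "j' < N" "first_slot K T (e i' j') k0" "k0 \<le> k'" "k' < K"
      "p = mkpath i' j' k0 k'" using pstr[OF pr(1)] by blast
    have "i' = i" using pr(2) h(6) mk_nth1[of i' j' k0 k'] by simp
    moreover have "(j', k') = (j, k)" using pr(3) h(6) mk_slot[OF h(4)] by simp
    ultimately show ?thesis using h by blast
  qed
  have feas1: "\<forall>i < M. \<forall>j k. ind i = Some (j, k) \<longrightarrow> j < N \<and> k < K \<and> e i j \<le> real (k * T)"
  proof (intro allI impI)
    fix i j k assume "i < M" "ind i = Some (j, k)"
    then obtain p where p: "p \<in> set ps" "p ! 1 = Ag i" "path_slot p = (j,k)" using indS by blast
    then obtain k0 where k0: "k0 \<le> k" "j < N" "k < K" "first_slot K T (e i j) k0" using slotinfo by blast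
    have "k0 * T \<le> k * T" using k0(1) by (rule mult_le_mono1)
    then have "real (k0 * T) \<le> real (k * T)" by (simp only: of_nat_le_iff)
    then show "j < N \<and> k < K \<and> e i j \<le> real (k * T)" using k0 unfolding first_slot_def by auto
  qed
  have feas2: "\<forall>i < M. \<forall>i' < M. ind i \<noteq> None \<and> ind i = ind i' \<longrightarrow> i = i'"
  proof (intro allI impI)
    fix i i' assume ii: "i < M" "i' < M" "ind i \<noteq> None \<and> ind i = ind i'"
    then obtain jk where "ind i = Some jk" "ind i' = Some jk" by (metis option.exhaust)
    then obtain j k where jk: "ind i = Some (j,k)" "ind i' = Some (j,k)" by (metis prod.exhaust)
    obtain p where p: "p \<in> set ps" "p ! 1 = Ag i" "path_slot p = (j,k)" using indS[OF jk(1)] by blast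
    obtain p' where p': "p' \<in> set ps" "p' ! 1 = Ag i'" "path_slot p' = (j,k)" using indS[OF jk(2)] by blast
    obtain k0 where k0: "k0 \<le> k" "p = mkpath i j k0 k" using slotinfo[OF p] by blast
    obtain k0' where k0': "k0' \<le> k" "p' = mkpath i' j k0' k" using slotinfo[OF p'] by blast
    show "i = i'"
    proof (rule ccontr)
      assume "i \<noteq> i'"
      then have "p \<noteq> p'" using p(2) p'(2) by (metis vertex.inject(1))
      have "(Sl j k, Snk) \<in> set (path_edges p)" unfolding k0(2) mk_edges[OF k0(1)] by blast
      then have c1: "1 \<le> count_list (path_edges p) (Sl j k, Snk)"
        using count_list_0_iff[of "path_edges p" "(Sl j k, Snk)"] by linarith
      have "(Sl j k, Snk) \<in> set (path_edges p')" unfolding k0'(2) mk_edges[OF k0'(1)] by blast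
      then have c2: "1 \<le> count_list (path_edges p') (Sl j k, Snk)"
        using count_list_0_iff[of "path_edges p'" "(Sl j k, Snk)"] by linarith
      have "2 \<le> sum_list (map (\<lambda>p. count_list (path_edges p) (Sl j k, Snk)) ps)"
        using sum_list_two[OF p(1) p'(1) \<open>p \<noteq> p'\<close>, of "\<lambda>p. count_list (path_edges p) (Sl j k, Snk)"] c1 c2
        by linarith
      then have "2 \<le> f (Sl j k) Snk" using fdef[of "Sl j k" Snk] by simp
      moreover have "cap M N K T e (Sl j k) Snk \<le> 1" by simp
      ultimately show False using capf[of "Sl j k" Snk] by linarith
    qed
  qed
  have feas: "feasible M N K T e ind" unfolding feasible_def using feas1 feas2 by blast
  define C where "C = {i. i < M \<and> ind i \<noteq> None}"
  have fC: "finite C" unfolding C_def by simp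
  have fvf: "flow_value M N K f \<le> real (card C)"
  proof -
    have in0: "0 \<le> (\<Sum>v\<in>verts M N K. f v Src)" using capf by (simp add: sum_nonneg)
    have sub: "Ag ` C \<subseteq> verts M N K" unfolding C_def verts_def by auto
    have zero: "f Src v = 0" if "v \<in> verts M N K - Ag ` C" for v
    proof -
      have "count_list (path_edges p) (Src, v) = 0" if "p \<in> set ps" for p
      proof -
        obtain i j k0 k where h: "i < M" "k0 \<le> k" "p = mkpath i j k0 k" using pstr[OF \<open>p \<in> set ps\<close>] by blast
        have "p ! 1 = Ag i" using h(3) mk_nth1[of i j k0 k] by simp
        then have "i \<in> C" unfolding C_def using h(1) indN[of i] \<open>p \<in> set ps\<close> by blast
        then have "v \<noteq> Ag i" using \<open>v \<in> verts M N K - Ag ` C\<close> by auto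
        then have "(Src, v) \<notin> set (path_edges p)" using mk_edges[OF h(2), of i j] h(3) by auto
        then show ?thesis by (simp add: count_list_0_iff)
      qed
      then show ?thesis using fdef[of Src v] by simp
    qed
    have "(\<Sum>v\<in>verts M N K. f Src v) = (\<Sum>v\<in>Ag ` C. f Src v)"
      by (rule sum.mono_neutral_right[OF finite_verts sub]) (use zero in blast)
    also have "\<dots> \<le> (\<Sum>v\<in>Ag ` C. 1)"
    proof (rule sum_mono)
      fix v assume "v \<in> Ag ` C"
      then obtain i where "v = Ag i" "i < M" unfolding C_def by auto
      then show "f Src v \<le> 1" using capf[of Src v] by simp
    qed
    also have "\<dots> = real (card C)" by (simp add: card_image inj_on_def)
    finally show ?thesis unfolding flow_value_def using in0 by linarith
  qed
  have opt: "idle_time M N K T ind \<le> idle_time M N K T a" if fa: "feasible M N K T e a" for a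
  proof -
    obtain g where g: "is_flow M N K T e g" "flow_value M N K g = real (card {i. i < M \<and> a i \<noteq> None})"
      using exists_flow[OF fa assms(2)] by blast
    have "real (card {i. i < M \<and> a i \<noteq> None}) \<le> real (card C)" using maxf[OF g(1)] g(2) fvf by linarith
    then have "card {i. i < M \<and> a i \<noteq> None} \<le> card C" by simp
    then show ?thesis unfolding idle_time_def C_def by (intro mult_le_mono2 diff_le_mono2)
  qed
  show ?thesis using feas opt unfolding ind_def by blast
qed

end
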